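(* Let $\Delta$ and $\chi$ be integers with $2\le \chi\le \Delta$. If $G$ is a graph with maximum degree $\Delta$ and chromatic number $\chi$, then $$\chi'_{inj}(G)\le (\chi-1)\lceil 27\Delta\ln\Delta\rceil.$$ In particular, if $G$ is bipartite (with maximum degree $\Delta\ge 2$), then $\chi'_{inj}(G)\le \lceil 27\Delta\ln\Delta\rceil$.
   Context: All graphs are finite and simple; $\ln$ is the natural logarithm. An edge coloring of a graph $G$ (not necessarily proper) is \emph{injective} if any two distinct edges $e,f$ receive distinct colors whenever either (i) $e$ and $f$ share no vertex and some edge of $G$ joins an endpoint of $e$ to an endpoint of $f$, or (ii) $e$ and $f$ lie in a common triangle of $G$. The injective chromatic index $\chi'_{inj}(G)$ is the minimum number of colors in an injective edge coloring of $G$. *)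

theory Defs
  imports Complex_Main
begin

definition simple_graph :: "'a set \<Rightarrow> 'a set set \<Rightarrow> bool" where
  "simple_graph V E \<longleftrightarrow> finite V \<and> (\<forall>e\<in>E. e \<subseteq> V \<and> card e = 2)"

definition degree :: "'a set set \<Rightarrow> 'a \<Rightarrow> nat" where
  "degree E v = card {e\<in>E. v \<in> e}"

definition max_degree :: "'a set \<Rightarrow> 'a set set \<Rightarrow> nat" where
  "max_degree V E = Max (insert 0 (degree E ` V))"

definition proper_vertex_coloring :: "'a set \<Rightarrow> 'a set set \<Rightarrow> nat \<Rightarrow> ('a \<Rightarrow> nat) \<Rightarrow> bool" where
  "proper_vertex_coloring V E k c \<longleftrightarrow>
     c ` V \<subseteq> {..<k} \<and> (\<forall>u v. {u, v} \<in> E \<longrightarrow> c u \<noteq> c v)"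

definition chromatic_number :: "'a set \<Rightarrow> 'a set set \<Rightarrow> nat" where
  "chromatic_number V E = (LEAST k. \<exists>c. proper_vertex_coloring V E k c)"

definition bipartite :: "'a set \<Rightarrow> 'a set set \<Rightarrow> bool" where
  "bipartite V E \<longleftrightarrow> (\<exists>c. proper_vertex_coloring V E 2 c)"

definition inj_conflict :: "'a set set \<Rightarrow> 'a set \<Rightarrow> 'a set \<Rightarrow> bool" where
  "inj_conflict E e f \<longleftrightarrow>
     (e \<inter> f = {} \<and> (\<exists>g\<in>E. g \<inter> e \<noteq> {} \<and> g \<inter> f \<noteq> {})) \<or>
     (\<exists>a b c. {a, b} \<in> E \<and> {b, c} \<in> E \<and> {a, c} \<in> E \<and>
        e \<in> {{a, b}, {b, c}, {a, c}} \<and> f \<in> {{a, b}, {b, c}, {a, c}})"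

definition injective_edge_coloring :: "'a set set \<Rightarrow> nat \<Rightarrow> ('a set \<Rightarrow> nat) \<Rightarrow> bool" where
  "injective_edge_coloring E k col \<longleftrightarrow>
     col ` E \<subseteq> {..<k} \<and>
     (\<forall>e\<in>E. \<forall>f\<in>E. e \<noteq> f \<and> inj_conflict E e f \<longrightarrow> col e \<noteq> col f)"

definition inj_chromatic_index :: "'a set set \<Rightarrow> nat" where
  "inj_chromatic_index E = (LEAST k. \<exists>col. injective_edge_coloring E k col)"

end

theory Submission
  imports Defs "HOL-Library.FuncSet"
begin


definition dep :: "('i \<Rightarrow> 'v) set \<Rightarrow> 'i set \<Rightarrow> ('i \<Rightarrow> 'v) set \<Rightarrow> bool" where
  "dep \<Omega> Y A \<longleftrightarrow> (\<forall>\<omega>\<in>\<Omega>. \<forall>\<omega>'\<in>\<Omega>. (\<forall>i\<in>Y. \<omega> i = \<omega>' i) \<longrightarrow> (\<omega> \<in> A \<longleftrightarrow> \<omega>' \<in> A))"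

definition mrg :: "'i set \<Rightarrow> ('i \<Rightarrow> 'v) \<Rightarrow> ('i \<Rightarrow> 'v) \<Rightarrow> ('i \<Rightarrow> 'v)" where
  "mrg Y a b = (\<lambda>i. if i \<in> Y then a i else b i)"

lemma merge_image:
  assumes Y: "Y \<subseteq> I" and A: "A \<subseteq> PiE I F" "dep (PiE I F) Y A"
    and B: "B \<subseteq> PiE I F" "dep (PiE I F) (I - Y) B"
  shows "A \<inter> B = (\<lambda>(a,b). mrg Y a b) ` ((\<lambda>\<omega>. restrict \<omega> Y) ` A \<times> (\<lambda>\<omega>. restrict \<omega> (I - Y)) ` B)"
proof
  show "A \<inter> B \<subseteq> (\<lambda>(a,b). mrg Y a b) ` ((\<lambda>\<omega>. restrict \<omega> Y) ` A \<times> (\<lambda>\<omega>. restrict \<omega> (I - Y)) ` B)"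
  proof
    fix \<omega> assume w: "\<omega> \<in> A \<inter> B"
    then have "\<omega> \<in> PiE I F" using A by auto
    then have "\<omega> = mrg Y (restrict \<omega> Y) (restrict \<omega> (I - Y))"
      using Y by (auto simp: mrg_def fun_eq_iff PiE_def extensional_def)
    then show "\<omega> \<in> (\<lambda>(a,b). mrg Y a b) ` ((\<lambda>\<omega>. restrict \<omega> Y) ` A \<times> (\<lambda>\<omega>. restrict \<omega> (I - Y)) ` B)"
      using w by (intro image_eqI[where x="(restrict \<omega> Y, restrict \<omega> (I - Y))"]) auto
  qed
next
  show "(\<lambda>(a,b). mrg Y a b) ` ((\<lambda>\<omega>. restrict \<omega> Y) ` A \<times> (\<lambda>\<omega>. restrict \<omega> (I - Y)) ` B) \<subseteq> A \<inter> B"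
  proof clarify
    fix w1 w2 assume w1: "w1 \<in> A" and w2: "w2 \<in> B"
    let ?w = "mrg Y (restrict w1 Y) (restrict w2 (I - Y))"
    have i1: "w1 \<in> PiE I F" "w2 \<in> PiE I F" using w1 w2 A B by auto
    have win: "?w \<in> PiE I F" using i1 Y by (auto simp: mrg_def PiE_def Pi_def extensional_def)
    have "\<forall>i\<in>Y. w1 i = ?w i" by (auto simp: mrg_def)
    then have "?w \<in> A" using A(2) w1 win i1 unfolding dep_def by blast
    moreover have "\<forall>i\<in>I - Y. w2 i = ?w i" by (auto simp: mrg_def)
    then have "?w \<in> B" using B(2) w2 win i1 unfolding dep_def by blast
    ultimately show "?w \<in> A \<inter> B" by blast
  qed
qed

lemma merge_inj:
  assumes "Y \<subseteq> I" "A \<subseteq> PiE I F" "B \<subseteq> PiE I F"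
  shows "inj_on (\<lambda>(a,b). mrg Y a b) ((\<lambda>\<omega>. restrict \<omega> Y) ` A \<times> (\<lambda>\<omega>. restrict \<omega> (I - Y)) ` B)"
proof (rule inj_onI, clarify)
  fix a1 b1 a2 b2
  assume eq: "mrg Y (restrict a1 Y) (restrict b1 (I - Y)) = mrg Y (restrict a2 Y) (restrict b2 (I - Y))"
  show "restrict a1 Y = restrict a2 Y \<and> restrict b1 (I - Y) = restrict b2 (I - Y)"
  proof
    show "restrict a1 Y = restrict a2 Y"
    proof
      fix i show "restrict a1 Y i = restrict a2 Y i"
        using fun_cong[OF eq, of i] by (auto simp: mrg_def)
    qed
    show "restrict b1 (I - Y) = restrict b2 (I - Y)"
    proof
      fix i show "restrict b1 (I - Y) i = restrict b2 (I - Y) i"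
        using fun_cong[OF eq, of i] by (auto simp: mrg_def)
    qed
  qed
qed

lemma card_merge:
  assumes Y: "Y \<subseteq> I" and A: "A \<subseteq> PiE I F" "dep (PiE I F) Y A"
    and B: "B \<subseteq> PiE I F" "dep (PiE I F) (I - Y) B"
  shows "card (A \<inter> B) = card ((\<lambda>\<omega>. restrict \<omega> Y) ` A) * card ((\<lambda>\<omega>. restrict \<omega> (I - Y)) ` B)"
  using merge_image[OF assms] merge_inj[OF Y A(1) B(1)]
  by (simp add: card_image card_cartesian_product)

lemma dep_full: "dep \<Omega> Y \<Omega>" by (auto simp: dep_def)

lemma indep_card:
  assumes Y: "Y \<subseteq> I" and A: "A \<subseteq> PiE I F" "dep (PiE I F) Y A"
    and B: "B \<subseteq> PiE I F" "dep (PiE I F) (I - Y) B"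
  shows "card (A \<inter> B) * card (PiE I F) = card A * card B"
proof -
  let ?\<Omega> = "PiE I F"
  have 1: "card (A \<inter> B) = card ((\<lambda>\<omega>. restrict \<omega> Y) ` A) * card ((\<lambda>\<omega>. restrict \<omega> (I - Y)) ` B)"
    by (rule card_merge[OF assms])
  have 2: "card A = card ((\<lambda>\<omega>. restrict \<omega> Y) ` A) * card ((\<lambda>\<omega>. restrict \<omega> (I - Y)) ` ?\<Omega>)"
    using card_merge[OF Y A subset_refl dep_full] A(1) by (simp add: Int_absorb2)
  have 3: "card B = card ((\<lambda>\<omega>. restrict \<omega> Y) ` ?\<Omega>) * card ((\<lambda>\<omega>. restrict \<omega> (I - Y)) ` B)"
    using card_merge[OF Y subset_refl dep_full B] B(1) by (simp add: Int_absorb1)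
  have 4: "card ?\<Omega> = card ((\<lambda>\<omega>. restrict \<omega> Y) ` ?\<Omega>) * card ((\<lambda>\<omega>. restrict \<omega> (I - Y)) ` ?\<Omega>)"
    using card_merge[OF Y subset_refl dep_full subset_refl dep_full] by simp
  show ?thesis unfolding 1 2 3 4 by (simp add: algebra_simps)
qed

lemma dep_mono: "dep \<Omega> Y A \<Longrightarrow> Y \<subseteq> Y' \<Longrightarrow> dep \<Omega> Y' A"
  unfolding dep_def by blast

lemma dep_all:
  assumes "\<And>t. t \<in> T \<Longrightarrow> dep \<Omega> (Y t) (G t)"
  shows "dep \<Omega> (\<Union>t\<in>T. Y t) {\<omega>\<in>\<Omega>. \<forall>t\<in>T. \<omega> \<in> G t}"
  unfolding dep_def
proof (intro ballI impI)
  fix \<omega> \<omega>' assume w: "\<omega> \<in> \<Omega>" "\<omega>' \<in> \<Omega>" and ag: "\<forall>i\<in>(\<Union>t\<in>T. Y t). \<omega> i = \<omega>' i"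
  have "\<And>t. t \<in> T \<Longrightarrow> (\<omega> \<in> G t \<longleftrightarrow> \<omega>' \<in> G t)"
  proof -
    fix t assume t: "t \<in> T"
    have "\<forall>i\<in>Y t. \<omega> i = \<omega>' i" using ag t by blast
    then show "\<omega> \<in> G t \<longleftrightarrow> \<omega>' \<in> G t" using assms[OF t] w unfolding dep_def by blast
  qed
  then show "(\<omega> \<in> {\<omega> \<in> \<Omega>. \<forall>t\<in>T. \<omega> \<in> G t}) = (\<omega>' \<in> {\<omega> \<in> \<Omega>. \<forall>t\<in>T. \<omega> \<in> G t})"
    using w by blast
qed

lemma dep_none:
  assumes "\<And>t. t \<in> T \<Longrightarrow> dep \<Omega> (Y t) (G t)"
  shows "dep \<Omega> (\<Union>t\<in>T. Y t) (\<Omega> - (\<Union>t\<in>T. G t))"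
  unfolding dep_def
proof (intro ballI impI)
  fix \<omega> \<omega>' assume w: "\<omega> \<in> \<Omega>" "\<omega>' \<in> \<Omega>" and ag: "\<forall>i\<in>(\<Union>t\<in>T. Y t). \<omega> i = \<omega>' i"
  have "\<And>t. t \<in> T \<Longrightarrow> (\<omega> \<in> G t \<longleftrightarrow> \<omega>' \<in> G t)"
  proof -
    fix t assume t: "t \<in> T"
    have "\<forall>i\<in>Y t. \<omega> i = \<omega>' i" using ag t by blast
    then show "\<omega> \<in> G t \<longleftrightarrow> \<omega>' \<in> G t" using assms[OF t] w unfolding dep_def by blast
  qed
  then show "(\<omega> \<in> \<Omega> - (\<Union>t\<in>T. G t)) = (\<omega>' \<in> \<Omega> - (\<Union>t\<in>T. G t))"
    using w by blast
qed

lemma indep_prod: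
  assumes T: "finite T"
    and Y: "\<And>t. t \<in> T \<Longrightarrow> Y t \<subseteq> I"
    and G: "\<And>t. t \<in> T \<Longrightarrow> G t \<subseteq> PiE I F"
    and D: "\<And>t. t \<in> T \<Longrightarrow> dep (PiE I F) (Y t) (G t)"
    and disj: "\<And>s t. s \<in> T \<Longrightarrow> t \<in> T \<Longrightarrow> s \<noteq> t \<Longrightarrow> Y s \<inter> Y t = {}"
  shows "card {\<omega>\<in>PiE I F. \<forall>t\<in>T. \<omega> \<in> G t} * card (PiE I F) ^ card T
         = (\<Prod>t\<in>T. card (G t)) * card (PiE I F)"
  using T Y G D disj
proof (induction T rule: finite_induct)
  case empty
  then show ?case by simp
next
  case (insert t T)
  let ?\<Omega> = "PiE I F"
  let ?H = "{\<omega>\<in>?\<Omega>. \<forall>s\<in>T. \<omega> \<in> G s}"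
  have IH: "card ?H * card ?\<Omega> ^ card T = (\<Prod>t\<in>T. card (G t)) * card ?\<Omega>"
    using insert.IH insert.prems by auto
  have eq: "{\<omega>\<in>?\<Omega>. \<forall>s\<in>insert t T. \<omega> \<in> G s} = G t \<inter> ?H"
    using insert.prems(2)[of t] by auto
  have dH: "dep ?\<Omega> (\<Union>s\<in>T. Y s) ?H" by (rule dep_all) (use insert.prems in auto)
  have sub: "(\<Union>s\<in>T. Y s) \<subseteq> I - Y t"
    using insert.prems(1,4) insert.hyps(2) by blast
  have ind: "card (G t \<inter> ?H) * card ?\<Omega> = card (G t) * card ?H"
    by (rule indep_card) (use insert.prems dep_mono[OF dH sub] in auto)
  have "card {\<omega>\<in>?\<Omega>. \<forall>s\<in>insert t T. \<omega> \<in> G s} * card ?\<Omega> ^ card (insert t T)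
      = (card (G t \<inter> ?H) * card ?\<Omega>) * card ?\<Omega> ^ card T"
    unfolding eq using insert.hyps by simp
  also have "\<dots> = card (G t) * (card ?H * card ?\<Omega> ^ card T)" by (simp add: ind)
  also have "\<dots> = (\<Prod>s\<in>insert t T. card (G s)) * card ?\<Omega>"
    using insert.hyps by (simp add: IH)
  finally show ?case .
qed

lemma lll_step:
  fixes A :: "'j \<Rightarrow> 'w set" and \<Gamma> :: "'j \<Rightarrow> 'j set" and d :: nat
  assumes fin: "finite \<Omega>" "finite J" "\<Omega> \<noteq> {}"
    and AJ: "\<And>j. j \<in> J \<Longrightarrow> A j \<subseteq> \<Omega>"
    and indep: "\<And>j S. j \<in> J \<Longrightarrow> S \<subseteq> J \<Longrightarrow> j \<notin> S \<Longrightarrow> S \<inter> \<Gamma> j = {} \<Longrightarrow>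
        card (A j \<inter> (\<Omega> - \<Union>(A ` S))) * card \<Omega> \<le> card (A j) * card (\<Omega> - \<Union>(A ` S))"
    and deg: "\<And>j. j \<in> J \<Longrightarrow> card (\<Gamma> j \<inter> J) \<le> d"
    and small: "\<And>j. j \<in> J \<Longrightarrow> 4 * (d + 1) * card (A j) \<le> card \<Omega>"
  shows "S \<subseteq> J \<Longrightarrow> j \<in> J \<Longrightarrow> j \<notin> S \<Longrightarrow>
     2 * (d + 1) * card (A j \<inter> (\<Omega> - \<Union>(A ` S))) \<le> card (\<Omega> - \<Union>(A ` S))"
proof (induction "card S" arbitrary: S j rule: less_induct)
  case less
  define C where "C S = \<Omega> - \<Union>(A ` S)" for S
  define S1 where "S1 = S \<inter> \<Gamma> j"
  define S2 where "S2 = S - \<Gamma> j"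
  have finS: "finite S" using less.prems(1) fin(2) finite_subset by blast
  have finC: "finite (C T)" for T unfolding C_def using fin(1) by simp
  define x where "x = card (A j \<inter> C S)"
  have a: "x \<le> card (A j \<inter> C S2)"
    unfolding x_def C_def S2_def using fin(1) by (intro card_mono) auto
  have b0: "card (A j \<inter> C S2) * card \<Omega> \<le> card (A j) * card (C S2)"
    unfolding C_def S2_def using less.prems by (intro indep) auto
  have pos: "card \<Omega> > 0" using fin by (simp add: card_gt_0_iff)
  have "4 * (d + 1) * card (A j \<inter> C S2) * card \<Omega> \<le> 4 * (d + 1) * card (A j) * card (C S2)"
    using b0 by (metis mult.assoc mult_le_mono2)
  also have "\<dots> \<le> card \<Omega> * card (C S2)"
    using small[OF less.prems(2)] by (rule mult_le_mono1)
  finally have b: "4 * (d + 1) * card (A j \<inter> C S2) \<le> card (C S2)"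
    using pos by (metis mult.commute mult_le_cancel1)
  have IH: "2 * (d + 1) * card (A k \<inter> C S2) \<le> card (C S2)" if k: "k \<in> S1" for k
  proof -
    have "S2 \<subset> S" using k unfolding S1_def S2_def by blast
    then have "card S2 < card S" using finS by (simp add: psubset_card_mono)
    then show ?thesis unfolding C_def
      using less.hyps[of S2 k] k less.prems unfolding S1_def S2_def by auto
  qed
  have cov: "C S2 \<subseteq> C S \<union> (\<Union>k\<in>S1. A k \<inter> C S2)"
    unfolding C_def S1_def S2_def by blast
  have finS1: "finite S1" unfolding S1_def using finS by simp
  have "card (C S2) \<le> card (C S \<union> (\<Union>k\<in>S1. A k \<inter> C S2))"
    using cov finC finS1 by (intro card_mono) auto
  also have "\<dots> \<le> card (C S) + card (\<Union>k\<in>S1. A k \<inter> C S2)" by (rule card_Un_le)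
  also have "\<dots> \<le> card (C S) + (\<Sum>k\<in>S1. card (A k \<inter> C S2))"
    using card_UN_le[OF finS1, of "\<lambda>k. A k \<inter> C S2"] by simp
  finally have c1: "card (C S2) \<le> card (C S) + (\<Sum>k\<in>S1. card (A k \<inter> C S2))" .
  have "2 * (d + 1) * (\<Sum>k\<in>S1. card (A k \<inter> C S2)) = (\<Sum>k\<in>S1. 2 * (d + 1) * card (A k \<inter> C S2))"
    by (simp add: sum_distrib_left)
  also have "\<dots> \<le> (\<Sum>k\<in>S1. card (C S2))" by (rule sum_mono) (rule IH)
  also have "\<dots> = card S1 * card (C S2)" by simp
  also have "\<dots> \<le> d * card (C S2)"
  proof -
    have "S1 \<subseteq> \<Gamma> j \<inter> J" unfolding S1_def using less.prems by blast
    then have "card S1 \<le> card (\<Gamma> j \<inter> J)" using fin(2) by (intro card_mono) auto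
    then have "card S1 \<le> d" using deg[OF less.prems(2)] by simp
    then show ?thesis by (rule mult_le_mono1)
  qed
  finally have c2: "2 * (d + 1) * (\<Sum>k\<in>S1. card (A k \<inter> C S2)) \<le> d * card (C S2)" .
  have "2 * (d + 1) * card (C S2) \<le> 2 * (d + 1) * card (C S) + 2 * (d + 1) * (\<Sum>k\<in>S1. card (A k \<inter> C S2))"
    using c1 by (metis distrib_left mult_le_mono2)
  then have c3: "(d + 2) * card (C S2) \<le> 2 * (d + 1) * card (C S)"
    using c2 by (simp add: algebra_simps)
  have "(d + 2) * (4 * (d + 1) * x) \<le> (d + 2) * card (C S2)"
    using a b by (meson le_trans mult_le_mono2 order_refl)
  then have "(d + 2) * (4 * (d + 1) * x) \<le> 2 * (d + 1) * card (C S)" using c3 by linarith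
  then have "(d + 1) * (2 * ((d + 2) * x)) \<le> (d + 1) * card (C S)"
    by (simp add: algebra_simps)
  then have "2 * ((d + 2) * x) \<le> card (C S)" by (metis add_gr_0 mult_le_cancel1 zero_less_one)
  then have "2 * (d + 1) * x \<le> card (C S)"
    by (simp add: algebra_simps)
  then show ?case unfolding x_def C_def .
qed

lemma lll:
  fixes A :: "'j \<Rightarrow> 'w set" and \<Gamma> :: "'j \<Rightarrow> 'j set" and d :: nat
  assumes fin: "finite \<Omega>" "finite J" "\<Omega> \<noteq> {}"
    and AJ: "\<And>j. j \<in> J \<Longrightarrow> A j \<subseteq> \<Omega>"
    and indep: "\<And>j S. j \<in> J \<Longrightarrow> S \<subseteq> J \<Longrightarrow> j \<notin> S \<Longrightarrow> S \<inter> \<Gamma> j = {} \<Longrightarrow>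
        card (A j \<inter> (\<Omega> - \<Union>(A ` S))) * card \<Omega> \<le> card (A j) * card (\<Omega> - \<Union>(A ` S))"
    and deg: "\<And>j. j \<in> J \<Longrightarrow> card (\<Gamma> j \<inter> J) \<le> d"
    and small: "\<And>j. j \<in> J \<Longrightarrow> 4 * (d + 1) * card (A j) \<le> card \<Omega>"
  shows "\<exists>\<omega>\<in>\<Omega>. \<forall>j\<in>J. \<omega> \<notin> A j"
proof -
  have key: "card \<Omega> \<le> 2 ^ card S * card (\<Omega> - \<Union>(A ` S))" if "S \<subseteq> J" for S
  proof -
    have "finite S" using that fin(2) finite_subset by blast
    then show ?thesis using that
    proof (induction S rule: finite_induct)
      case empty
      then show ?case by simp
    next
      case (insert j S)
      let ?C = "\<Omega> - \<Union>(A ` S)"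
      have st: "2 * (d + 1) * card (A j \<inter> ?C) \<le> card ?C"
        using lll_step[OF assms, where S=S and j=j] insert by auto
      have eq: "\<Omega> - \<Union>(A ` insert j S) = ?C - (A j \<inter> ?C)" by auto
      have "card (\<Omega> - \<Union>(A ` insert j S)) = card ?C - card (A j \<inter> ?C)"
        unfolding eq using fin(1) by (intro card_Diff_subset) auto
      then have "card ?C \<le> 2 * card (\<Omega> - \<Union>(A ` insert j S))" using st by simp
      then have "2 ^ card S * card ?C \<le> 2 ^ card S * (2 * card (\<Omega> - \<Union>(A ` insert j S)))"
        by (rule mult_le_mono2)
      moreover have "card \<Omega> \<le> 2 ^ card S * card ?C" using insert by auto
      ultimately have "card \<Omega> \<le> 2 ^ card S * (2 * card (\<Omega> - \<Union>(A ` insert j S)))" by linarith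
      then show ?case using insert by (simp add: algebra_simps)
    qed
  qed
  have "card \<Omega> > 0" using fin by (simp add: card_gt_0_iff)
  then have "card (\<Omega> - \<Union>(A ` J)) \<noteq> 0" using key[of J] by (metis le_zero_eq mult_0_right not_gr0 order_refl)
  then have "\<Omega> - \<Union>(A ` J) \<noteq> {}" by (metis card.empty)
  then show ?thesis by blast
qed



definition nbr :: "'a set set \<Rightarrow> 'a \<Rightarrow> 'a set" where
  "nbr E x = {y. {x, y} \<in> E}"

lemma sg_finite_E: "simple_graph V E \<Longrightarrow> finite E"
  unfolding simple_graph_def by (meson finite_Pow_iff finite_subset subsetI PowI)

lemma sg_edge: "simple_graph V E \<Longrightarrow> {x, y} \<in> E \<Longrightarrow> x \<in> V \<and> y \<in> V \<and> x \<noteq> y"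
  unfolding simple_graph_def by (metis card_1_singleton_iff card_2_iff doubleton_eq_iff insert_absorb2 insert_subset numeral_eq_one_iff semiring_norm(85))

lemma sg_edge2: "simple_graph V E \<Longrightarrow> e \<in> E \<Longrightarrow> \<exists>x y. e = {x, y} \<and> x \<noteq> y"
  unfolding simple_graph_def by (meson card_2_iff)

lemma degree_le:
  assumes "simple_graph V E" "max_degree V E = \<Delta>"
  shows "degree E y \<le> \<Delta>"
proof (cases "y \<in> V")
  case True
  have "finite V" using assms(1) unfolding simple_graph_def by simp
  have "degree E y \<in> insert 0 (degree E ` V)" using True by blast
  then have "degree E y \<le> Max (insert 0 (degree E ` V))" using \<open>finite V\<close> by (intro Max_ge) auto
  then show ?thesis using assms(2) unfolding max_degree_def by simp
next
  case False
  then have "{e\<in>E. y \<in> e} = {}" using assms(1) unfolding simple_graph_def by blast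
  then show ?thesis unfolding degree_def by (metis card.empty le0)
qed

lemma nbr_sub: "simple_graph V E \<Longrightarrow> nbr E x \<subseteq> V"
  unfolding nbr_def using sg_edge by fastforce

lemma nbr_finite: "simple_graph V E \<Longrightarrow> finite (nbr E x)"
  using nbr_sub unfolding simple_graph_def by (meson finite_subset)

lemma card_nbr:
  assumes "simple_graph V E" "max_degree V E = \<Delta>"
  shows "card (nbr E x) \<le> \<Delta>"
proof -
  have "inj_on (\<lambda>y. {x, y}) (nbr E x)" by (rule inj_onI) (auto simp: doubleton_eq_iff)
  moreover have "(\<lambda>y. {x, y}) ` nbr E x \<subseteq> {e\<in>E. x \<in> e}" unfolding nbr_def by auto
  moreover have "finite {e\<in>E. x \<in> e}" using sg_finite_E[OF assms(1)] by simp
  ultimately have "card (nbr E x) \<le> degree E x" unfolding degree_def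
    by (metis card_image card_mono)
  then show ?thesis using degree_le[OF assms, of x] by linarith
qed

lemma card_edges_meeting:
  assumes "simple_graph V E" "max_degree V E = \<Delta>" "finite M"
  shows "card {f\<in>E. f \<inter> M \<noteq> {}} \<le> card M * \<Delta>"
proof -
  have "{f\<in>E. f \<inter> M \<noteq> {}} = (\<Union>y\<in>M. {f\<in>E. y \<in> f})" by blast
  then have "card {f\<in>E. f \<inter> M \<noteq> {}} \<le> (\<Sum>y\<in>M. card {f\<in>E. y \<in> f})"
    using card_UN_le[OF assms(3)] by simp
  also have "\<dots> \<le> (\<Sum>y\<in>M. \<Delta>)" apply (rule sum_mono)
    using degree_le[OF assms(1,2)] unfolding degree_def by blast
  finally show ?thesis by simp
qed

lemma inj_conflict_sym: "inj_conflict E e f \<Longrightarrow> inj_conflict E f e"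
  unfolding inj_conflict_def by blast

lemma greedy:
  fixes X :: "'x set"
  assumes "finite X" and deg: "\<And>x. x \<in> X \<Longrightarrow> card {y\<in>X. y \<noteq> x \<and> R x y} \<le> D"
    and sym: "\<And>x y. R x y \<Longrightarrow> R y x"
  shows "\<exists>col. col ` X \<subseteq> {..<D+1} \<and> (\<forall>x\<in>X. \<forall>y\<in>X. x \<noteq> y \<and> R x y \<longrightarrow> col x \<noteq> col y)"
proof -
  have "\<And>Y. Y \<subseteq> X \<Longrightarrow> \<exists>col. col ` Y \<subseteq> {..<D+1} \<and> (\<forall>x\<in>Y. \<forall>y\<in>Y. x \<noteq> y \<and> R x y \<longrightarrow> col x \<noteq> col y)"
  proof -
    fix Y assume YX: "Y \<subseteq> X"
    have "finite Y" using YX assms(1) finite_subset by blast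
    from this YX show "\<exists>col. col ` Y \<subseteq> {..<D+1} \<and> (\<forall>x\<in>Y. \<forall>y\<in>Y. x \<noteq> y \<and> R x y \<longrightarrow> col x \<noteq> col y)"
    proof (induction Y rule: finite_induct)
      case empty
      then show ?case by simp
    next
      case (insert x Y)
      obtain col where col: "col ` Y \<subseteq> {..<D+1}" "\<forall>x\<in>Y. \<forall>y\<in>Y. x \<noteq> y \<and> R x y \<longrightarrow> col x \<noteq> col y"
        using insert by auto
      let ?N = "{y\<in>Y. R x y}"
      have sub: "?N \<subseteq> {y\<in>X. y \<noteq> x \<and> R x y}" using insert by auto
      have finN: "finite ?N" using insert.hyps(1) by simp
      have "card ?N \<le> card {y\<in>X. y \<noteq> x \<and> R x y}"
        using sub assms(1) by (intro card_mono) auto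
      then have "card ?N \<le> D" using deg[of x] insert.prems by simp
      then have cD: "card (col ` ?N) \<le> D" using card_image_le[OF finN, of col] by linarith
      have "\<not> {..<D+1} \<subseteq> col ` ?N"
      proof
        assume "{..<D+1} \<subseteq> col ` ?N"
        then have "card {..<D+1} \<le> card (col ` ?N)" using finN by (intro card_mono) auto
        then show False using cD by simp
      qed
      then obtain c where c: "c < D + 1" "c \<notin> col ` ?N" by blast
      let ?col = "col(x := c)"
      have "?col ` insert x Y \<subseteq> {..<D+1}" using col(1) c(1) insert.hyps(2) by auto
      moreover have "\<forall>u\<in>insert x Y. \<forall>v\<in>insert x Y. u \<noteq> v \<and> R u v \<longrightarrow> ?col u \<noteq> ?col v"
      proof (intro ballI impI)
        fix u v assume uv: "u \<in> insert x Y" "v \<in> insert x Y" "u \<noteq> v \<and> R u v"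
        show "?col u \<noteq> ?col v"
        proof (cases "u = x")
          case True
          then have "v \<in> ?N" using uv by auto
          then show ?thesis using True uv c(2) insert.hyps(2) by auto
        next
          case False
          note uF = False
          show ?thesis
          proof (cases "v = x")
            case True
            then have "u \<in> ?N" using uv uF sym by auto
            then show ?thesis using True uF c(2) by auto
          next
            case False
            then show ?thesis using uF uv col(2) by auto
          qed
        qed
      qed
      ultimately show ?case by blast
    qed
  qed
  then show ?thesis by blast
qed

lemma tri_adj:
  assumes "{a, b} \<in> E" "{b, c} \<in> E" "{a, c} \<in> E" "p \<in> {a, b, c}" "q \<in> {a, b, c}" "p \<noteq> q"
  shows "{p, q} \<in> E"
proof -
  have "p = a \<or> p = b \<or> p = c" "q = a \<or> q = b \<or> q = c" using assms(4,5) by auto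
  then show ?thesis using assms(1,2,3,6) by (auto simp: insert_commute)
qed

lemma conflict_meet:
  assumes G: "simple_graph V E" and e: "e = {u, v}" "e \<in> E" and f: "f \<in> E" and c: "inj_conflict E e f"
  shows "f \<inter> (nbr E u \<union> nbr E v) \<noteq> {}"
  using c unfolding inj_conflict_def
proof (elim disjE conjE exE bexE)
  fix g assume d: "e \<inter> f = {}" "g \<in> E" "g \<inter> e \<noteq> {}" "g \<inter> f \<noteq> {}"
  obtain x y where g: "g = {x, y}" "x \<noteq> y" using sg_edge2[OF G d(2)] by blast
  obtain z where z: "z \<in> g" "z \<in> e" using d(3) by blast
  obtain w where w: "w \<in> g" "w \<in> f" using d(4) by blast
  have "z \<noteq> w" using z w d(1) by blast
  then have "g = {z, w}" using z w g by auto
  then have "w \<in> nbr E z" using d(2) unfolding nbr_def by simp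
  then show ?thesis using z(2) w(2) e by auto
next
  fix a b c assume t: "{a, b} \<in> E" "{b, c} \<in> E" "{a, c} \<in> E"
    "e \<in> {{a, b}, {b, c}, {a, c}}" "f \<in> {{a, b}, {b, c}, {a, c}}"
  obtain x y where fxy: "f = {x, y}" "x \<noteq> y" using sg_edge2[OF G f] by blast
  obtain w where w: "w \<in> f" "w \<noteq> u" using fxy by auto
  have "u \<in> {a, b, c}" "w \<in> {a, b, c}" using t(4,5) w(1) e by auto
  then have "{u, w} \<in> E" using tri_adj[OF t(1,2,3)] w(2) by blast
  then have "w \<in> nbr E u" unfolding nbr_def by simp
  then show ?thesis using w(1) by auto
qed

lemma greedy_piece:
  assumes G: "simple_graph V E" and md: "max_degree V E = \<Delta>" and E': "E' \<subseteq> E"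
  shows "\<exists>col. col ` E' \<subseteq> {..<2 * \<Delta> * \<Delta> + 1} \<and>
     (\<forall>e\<in>E'. \<forall>f\<in>E'. e \<noteq> f \<and> inj_conflict E e f \<longrightarrow> col e \<noteq> col f)"
proof -
  have finE: "finite E" by (rule sg_finite_E[OF G])
  have degf: "card {f\<in>E'. f \<noteq> e \<and> inj_conflict E e f} \<le> 2 * \<Delta> * \<Delta>" if e: "e \<in> E'" for e
  proof -
    obtain u v where uv: "e = {u, v}" "u \<noteq> v" using sg_edge2[OF G] e E' by blast
    let ?M = "nbr E u \<union> nbr E v"
    have finM: "finite ?M" using nbr_finite[OF G] by simp
    have cM: "card ?M \<le> 2 * \<Delta>" using card_Un_le[of "nbr E u" "nbr E v"] card_nbr[OF G md, of u] card_nbr[OF G md, of v] by linarith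
    have "{f\<in>E'. f \<noteq> e \<and> inj_conflict E e f} \<subseteq> {f\<in>E. f \<inter> ?M \<noteq> {}}"
      using conflict_meet[OF G uv(1)] e E' by blast
    then have "card {f\<in>E'. f \<noteq> e \<and> inj_conflict E e f} \<le> card {f\<in>E. f \<inter> ?M \<noteq> {}}"
      using finE by (intro card_mono) auto
    also have "\<dots> \<le> card ?M * \<Delta>" by (rule card_edges_meeting[OF G md finM])
    also have "\<dots> \<le> 2 * \<Delta> * \<Delta>" using cM by simp
    finally show ?thesis .
  qed
  have finE': "finite E'" using finE E' finite_subset by blast
  show ?thesis by (rule greedy[where X=E' and R="inj_conflict E" and D="2 * \<Delta> * \<Delta>", OF finE' degf inj_conflict_sym])
qed



lemma good_noconflict:
  assumes G: "simple_graph V E" and indA: "\<And>x y. {x, y} \<in> E \<Longrightarrow> \<not> (x \<in> A \<and> y \<in> A)"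
    and e: "e = {u, v}" "e \<in> E" "u \<in> A" "v \<notin> A"
    and f: "f = {u', v'}" "f \<in> E" "u' \<in> A" "v' \<notin> A"
    and ne: "e \<noteq> f"
    and Z: "v \<in> Z" "v' \<in> Z" "\<forall>w\<in>(nbr E u \<union> nbr E v) - {v}. w \<notin> Z"
      "\<forall>w\<in>(nbr E u' \<union> nbr E v') - {v'}. w \<notin> Z"
  shows "\<not> inj_conflict E e f"
proof
  assume "inj_conflict E e f"
  then show False unfolding inj_conflict_def
  proof (elim disjE conjE exE bexE)
    fix g assume d: "e \<inter> f = {}" "g \<in> E" "g \<inter> e \<noteq> {}" "g \<inter> f \<noteq> {}"
    obtain x y where g: "g = {x, y}" "x \<noteq> y" using sg_edge2[OF G d(2)] by blast
    obtain z where z: "z \<in> g" "z \<in> e" using d(3) by blast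
    obtain w where w: "w \<in> g" "w \<in> f" using d(4) by blast
    have "z \<noteq> w" using z w d(1) by blast
    then have gzw: "g = {z, w}" using z w g by auto
    have vv: "v \<noteq> v'" using d(1) e f by auto
    have zc: "z = u \<or> z = v" using z e by auto
    have wc: "w = u' \<or> w = v'" using w f by auto
    show False
    proof -
      { assume "z = u" "w = u'" then have False using indA[of u u'] gzw d(2) e f by auto }
      moreover
      { assume "z = u" "w = v'" then have "v' \<in> nbr E u" using gzw d(2) unfolding nbr_def by simp
        then have False using Z vv by auto }
      moreover
      { assume "z = v" "w = u'" then have "v \<in> nbr E u'" using gzw d(2) unfolding nbr_def by (simp add: insert_commute)
        then have False using Z vv by auto }
      moreover
      { assume "z = v" "w = v'" then have "v' \<in> nbr E v" using gzw d(2) unfolding nbr_def by simp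
        then have False using Z vv by auto }
      ultimately show False using zc wc by blast
    qed
  next
    fix a b c assume t: "{a, b} \<in> E" "{b, c} \<in> E" "{a, c} \<in> E"
      "e \<in> {{a, b}, {b, c}, {a, c}}" "f \<in> {{a, b}, {b, c}, {a, c}}"
    have uu: "u \<in> {a, b, c}" "u' \<in> {a, b, c}" using t(4,5) e(1) f(1) by auto
    show False
    proof (cases "u = u'")
      case False
      then have "{u, u'} \<in> E" using tri_adj[OF t(1,2,3) uu] by blast
      then show False using indA e(3) f(3) by blast
    next
      case True
      then have "v \<noteq> v'" using ne e f by auto
      moreover have "v' \<in> nbr E u" using True f unfolding nbr_def by simp
      ultimately show False using Z by auto
    qed
  qed
qed



lemma card_good:
  fixes V :: "'a set" and m K t :: nat
  assumes V: "finite V" and X: "X \<subseteq> V" "v \<in> X" and m: "m > 0" and t: "t < K"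
  defines "I \<equiv> V \<times> {..<K}"
  shows "card {\<omega>\<in>PiE I (\<lambda>_. {..<m}). \<omega> (v, t) = 0 \<and> (\<forall>w\<in>X - {v}. \<omega> (w, t) \<noteq> 0)} * m ^ card X
         = (m - 1) ^ (card X - 1) * card (PiE I (\<lambda>_. {..<m}))"
proof -
  define F' where "F' i = (if i = (v, t) then {0} else if i \<in> (X - {v}) \<times> {t} then {1..<m} else {..<m})" for i
  have eq: "{\<omega>\<in>PiE I (\<lambda>_. {..<m}). \<omega> (v, t) = 0 \<and> (\<forall>w\<in>X - {v}. \<omega> (w, t) \<noteq> 0)} = PiE I F'"
  proof (intro set_eqI iffI)
    fix \<omega> assume a: "\<omega> \<in> {\<omega>\<in>PiE I (\<lambda>_. {..<m}). \<omega> (v, t) = 0 \<and> (\<forall>w\<in>X - {v}. \<omega> (w, t) \<noteq> 0)}"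
    have a1: "\<omega> \<in> PiE I (\<lambda>_. {..<m})" and a2: "\<omega> (v, t) = 0" and a3: "\<forall>w\<in>X - {v}. \<omega> (w, t) \<noteq> 0"
      using a by auto
    show "\<omega> \<in> PiE I F'" unfolding PiE_iff
    proof
      show "\<forall>i\<in>I. \<omega> i \<in> F' i"
      proof
        fix i assume i: "i \<in> I"
        have wi: "\<omega> i < m" using a1 i by (auto simp: PiE_iff)
        show "\<omega> i \<in> F' i"
        proof (cases "i = (v, t)")
          case True then show ?thesis using a2 unfolding F'_def by simp
        next
          case False
          show ?thesis
          proof (cases "i \<in> (X - {v}) \<times> {t}")
            case True
            then obtain w where "i = (w, t)" "w \<in> X - {v}" by blast
            then have "\<omega> i \<noteq> 0" using a3 by simp
            then show ?thesis using True False wi unfolding F'_def by simp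
          next
            case False2: False
            then show ?thesis using False wi unfolding F'_def by simp
          qed
        qed
      qed
      show "\<omega> \<in> extensional I" using a1 by (simp add: PiE_iff)
    qed
  next
    fix \<omega> assume a: "\<omega> \<in> PiE I F'"
    have vI: "(v, t) \<in> I" using X t unfolding I_def by auto
    have "\<omega> (v, t) \<in> F' (v, t)" using a vI by (simp add: PiE_iff)
    then have "\<omega> (v, t) = 0" unfolding F'_def by simp
    moreover have "\<forall>w\<in>X - {v}. \<omega> (w, t) \<noteq> 0"
    proof
      fix w assume w: "w \<in> X - {v}"
      then have "(w, t) \<in> I" using X t unfolding I_def by auto
      then have "\<omega> (w, t) \<in> F' (w, t)" using a by (simp add: PiE_iff)
      then show "\<omega> (w, t) \<noteq> 0" using w unfolding F'_def by auto
    qed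
    moreover have "PiE I F' \<subseteq> PiE I (\<lambda>_. {..<m})" by (rule PiE_mono) (use m in \<open>auto simp: F'_def\<close>)
    then have "\<omega> \<in> PiE I (\<lambda>_. {..<m})" using a by blast
    ultimately show "\<omega> \<in> {\<omega>\<in>PiE I (\<lambda>_. {..<m}). \<omega> (v, t) = 0 \<and> (\<forall>w\<in>X - {v}. \<omega> (w, t) \<noteq> 0)}" by blast
  qed
  have finI: "finite I" unfolding I_def using V by simp
  define Y where "Y = X \<times> {t}"
  have YI: "Y \<subseteq> I" unfolding Y_def I_def using X t by auto
  have finX: "finite X" using V X finite_subset by blast
  have finY: "finite Y" unfolding Y_def using finX by simp
  have "card (PiE I F') = (\<Prod>i\<in>I. card (F' i))" by (rule card_PiE[OF finI])
  also have "\<dots> = (\<Prod>i\<in>I - Y. card (F' i)) * (\<Prod>i\<in>Y. card (F' i))"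
    by (rule prod.subset_diff[OF YI finI])
  also have "(\<Prod>i\<in>I - Y. card (F' i)) = (\<Prod>i\<in>I - Y. m)"
    by (rule prod.cong) (auto simp: F'_def Y_def X)
  also have "\<dots> = m ^ card (I - Y)" by simp
  also have "(\<Prod>i\<in>Y. card (F' i)) = (\<Prod>w\<in>X. card (F' (w, t)))"
  proof -
    have "Y = (\<lambda>w. (w, t)) ` X" unfolding Y_def by auto
    moreover have "inj_on (\<lambda>w. (w, t)) X" by (rule inj_onI) auto
    ultimately show ?thesis by (simp add: prod.reindex)
  qed
  also have "\<dots> = (\<Prod>w\<in>X. if w = v then 1 else m - 1)"
    by (rule prod.cong) (auto simp: F'_def)
  also have "\<dots> = (m - 1) ^ (card X - 1)"
  proof -
    have "(\<Prod>w\<in>X. if w = v then 1 else m - 1) = (if v = v then 1 else m - 1) * (\<Prod>w\<in>X - {v}. if w = v then 1 else m - 1)"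
      by (rule prod.remove[OF finX X(2)])
    also have "(\<Prod>w\<in>X - {v}. if w = v then 1 else m - 1) = (\<Prod>w\<in>X - {v}. m - 1)"
      by (rule prod.cong) auto
    finally show ?thesis using X(2) finX by (simp add: card_Diff_singleton)
  qed
  finally have cF: "card (PiE I F') = m ^ card (I - Y) * (m - 1) ^ (card X - 1)" .
  have cY: "card Y = card X" unfolding Y_def by (simp add: card_cartesian_product)
  have cIY: "card (I - Y) + card X = card I"
    using card_Diff_subset[OF finY YI] card_mono[OF finI YI] cY by simp
  have cO: "card (PiE I (\<lambda>_. {..<m})) = m ^ card I" using card_PiE[OF finI, of "\<lambda>_. {..<m}"] by simp
  have "m ^ card (I - Y) * (m - 1) ^ (card X - 1) * m ^ card X = (m - 1) ^ (card X - 1) * (m ^ card (I - Y) * m ^ card X)"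
    by (simp only: mult_ac)
  also have "\<dots> = (m - 1) ^ (card X - 1) * m ^ card I" by (simp only: power_add[symmetric] cIY)
  finally show ?thesis unfolding eq cF cO .
qed



definition goodw :: "'a set \<Rightarrow> 'a \<Rightarrow> nat \<Rightarrow> ('a \<times> nat \<Rightarrow> nat) \<Rightarrow> bool" where
  "goodw X v t \<omega> \<longleftrightarrow> \<omega> (v, t) = 0 \<and> (\<forall>w\<in>X - {v}. \<omega> (w, t) \<noteq> 0)"

definition BadS :: "'a set \<Rightarrow> nat \<Rightarrow> nat \<Rightarrow> 'a set \<Rightarrow> 'a \<Rightarrow> ('a \<times> nat \<Rightarrow> nat) set" where
  "BadS V K m X v = {\<omega>\<in>PiE (V \<times> {..<K}) (\<lambda>_. {..<m}). \<forall>t<K. \<not> goodw X v t \<omega>}"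

lemma goodw_dep:
  fixes \<omega> \<omega>' :: "'a \<times> nat \<Rightarrow> nat"
  assumes "v \<in> X" "\<forall>i\<in>X \<times> {t}. \<omega> i = \<omega>' i"
  shows "goodw X v t \<omega> \<longleftrightarrow> goodw X v t \<omega>'"
  using assms unfolding goodw_def by auto

lemma BadS_dep:
  assumes "v \<in> X"
  shows "dep (PiE (V \<times> {..<K}) (\<lambda>_. {..<m})) (X \<times> {..<K}) (BadS V K m X v)"
  unfolding dep_def BadS_def
proof (intro ballI impI)
  fix \<omega> \<omega>' :: "'a \<times> nat \<Rightarrow> nat" assume "\<forall>i\<in>X \<times> {..<K}. \<omega> i = \<omega>' i"
  then have "\<And>t. t < K \<Longrightarrow> goodw X v t \<omega> \<longleftrightarrow> goodw X v t \<omega>'"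
    using goodw_dep[OF assms] by auto
  moreover assume "\<omega> \<in> PiE (V \<times> {..<K}) (\<lambda>_. {..<m})" "\<omega>' \<in> PiE (V \<times> {..<K}) (\<lambda>_. {..<m})"
  ultimately show "(\<omega> \<in> {\<omega> \<in> PiE (V \<times> {..<K}) (\<lambda>_. {..<m}). \<forall>t<K. \<not> goodw X v t \<omega>}) =
       (\<omega>' \<in> {\<omega> \<in> PiE (V \<times> {..<K}) (\<lambda>_. {..<m}). \<forall>t<K. \<not> goodw X v t \<omega>})" by auto
qed

lemma bad_prob:
  fixes V :: "'a set" and m K :: nat
  assumes V: "finite V" and X: "X \<subseteq> V" "v \<in> X" and m: "m > 0" and K: "K > 0"
  shows "real (card (BadS V K m X v)) =
    (1 - real ((m - 1) ^ (card X - 1)) / real (m ^ card X)) ^ K * real (card (PiE (V \<times> {..<K}) (\<lambda>_. {..<m})))"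
proof -
  define I where "I = V \<times> {..<K}"
  define \<Omega> where "\<Omega> = PiE I (\<lambda>_. {..<m::nat})"
  define G where "G t = {\<omega>\<in>\<Omega>. \<not> goodw X v t \<omega>}" for t
  define N where "N = card \<Omega>"
  define g where "g = card {\<omega>\<in>\<Omega>. goodw X v 0 \<omega>}"
  have finI: "finite I" unfolding I_def using V by simp
  have finO: "finite \<Omega>" unfolding \<Omega>_def using finI by (simp add: finite_PiE)
  have Npos: "N > 0" unfolding N_def \<Omega>_def using finO m
    by (metis \<Omega>_def card_gt_0_iff PiE_eq_empty_iff lessThan_empty_iff not_gr_zero)
  have cg: "card {\<omega>\<in>\<Omega>. goodw X v t \<omega>} * m ^ card X = (m - 1) ^ (card X - 1) * N" if t: "t < K" for t
    using card_good[OF V X m t] unfolding \<Omega>_def I_def N_def goodw_def by simp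
  have gconst: "card {\<omega>\<in>\<Omega>. goodw X v t \<omega>} = g" if t: "t < K" for t
  proof -
    have "K > 0" using t by simp
    then have "card {\<omega>\<in>\<Omega>. goodw X v 0 \<omega>} * m ^ card X = (m - 1) ^ (card X - 1) * N" using cg by simp
    moreover have "m ^ card X \<noteq> 0" using m by simp
    ultimately show ?thesis using cg[OF t] unfolding g_def by (metis mult_right_cancel)
  qed
  have cG: "card (G t) = N - g" if t: "t < K" for t
  proof -
    have "G t = \<Omega> - {\<omega>\<in>\<Omega>. goodw X v t \<omega>}" unfolding G_def by auto
    then show ?thesis using card_Diff_subset[of "{\<omega>\<in>\<Omega>. goodw X v t \<omega>}" \<Omega>] finO gconst[OF t]
      unfolding N_def by auto
  qed
  have gN: "g \<le> N" unfolding g_def N_def using finO by (intro card_mono) auto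
  have ip: "card {\<omega>\<in>\<Omega>. \<forall>t\<in>{..<K}. \<omega> \<in> G t} * N ^ card {..<K} = (\<Prod>t\<in>{..<K}. card (G t)) * N"
    unfolding \<Omega>_def N_def
  proof (rule indep_prod[where Y="\<lambda>t. X \<times> {t}"])
    show "finite {..<K}" by simp
    show "\<And>t. t \<in> {..<K} \<Longrightarrow> X \<times> {t} \<subseteq> I" using X unfolding I_def by auto
    show "\<And>t. t \<in> {..<K} \<Longrightarrow> G t \<subseteq> PiE I (\<lambda>_. {..<m})" unfolding G_def \<Omega>_def by auto
    show "\<And>t. t \<in> {..<K} \<Longrightarrow> dep (PiE I (\<lambda>_. {..<m})) (X \<times> {t}) (G t)"
      unfolding dep_def G_def \<Omega>_def using goodw_dep[OF X(2)] by blast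
    show "\<And>s t. s \<in> {..<K} \<Longrightarrow> t \<in> {..<K} \<Longrightarrow> s \<noteq> t \<Longrightarrow> X \<times> {s} \<inter> X \<times> {t} = {}" by auto
  qed
  have Beq: "BadS V K m X v = {\<omega>\<in>\<Omega>. \<forall>t\<in>{..<K}. \<omega> \<in> G t}"
    unfolding BadS_def G_def \<Omega>_def I_def by auto
  have "(\<Prod>t\<in>{..<K}. card (G t)) = (\<Prod>t\<in>{..<K}. N - g)" by (rule prod.cong) (auto simp: cG)
  then have nat_eq: "card (BadS V K m X v) * N ^ K = (N - g) ^ K * N" using ip Beq by simp
  have "real (card (BadS V K m X v)) * real N ^ K = (real N - real g) ^ K * real N"
    using arg_cong[OF nat_eq, of real] gN by (simp add: of_nat_diff)
  then have r1: "real (card (BadS V K m X v)) = ((real N - real g) / real N) ^ K * real N"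
    using Npos by (simp add: power_divide field_simps)
  have "real g * real m ^ card X = real (m - 1) ^ (card X - 1) * real N"
    using arg_cong[OF cg[of 0], of real] gconst[of 0]
    using K by (auto simp: of_nat_mult)
  then have "real g / real N = real ((m - 1) ^ (card X - 1)) / real (m ^ card X)"
    using Npos m by (simp add: field_simps)
  moreover have "(real N - real g) / real N = 1 - real g / real N" using Npos by (simp add: field_simps)
  ultimately show ?thesis using r1 unfolding N_def \<Omega>_def I_def by simp
qed



lemma one_plus_pow_le_exp: "(1 + 1 / real n) ^ n \<le> exp 1" if "n > 0" for n :: nat
proof -
  have "(1 + 1 / real n) ^ n \<le> exp (1 / real n) ^ n"
    by (rule power_mono) (use exp_ge_add_one_self[of "1 / real n"] in auto)
  also have "\<dots> = exp 1" using that by (simp add: exp_of_nat_mult[symmetric])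
  finally show ?thesis .
qed

lemma numeric:
  fixes D K x :: nat
  assumes D: "D \<ge> 6" and K: "real K \<ge> 27 * real D * ln (real D)" and x: "1 \<le> x" "x \<le> 2 * D"
  shows "4 * (2 * real D ^ 3 + 1) * (1 - real ((2 * D - 1) ^ (x - 1)) / real ((2 * D) ^ x)) ^ K \<le> 1"
proof -
  define m where "m = 2 * D"
  have m: "m \<ge> 12" unfolding m_def using D by simp
  define r where "r = (real m - 1) / real m"
  have r0: "0 \<le> r" "r \<le> 1" unfolding r_def using m by auto
  define q where "q = real ((2 * D - 1) ^ (x - 1)) / real ((2 * D) ^ x)"
  have qr: "q = r ^ (x - 1) / real m"
  proof -
    have "real ((2 * D) ^ x) = real m ^ (x - 1) * real m" using x unfolding m_def
      by (metis of_nat_mult of_nat_power power_minus_mult not_one_le_zero zero_less_iff_neq_zero le_zero_eq)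
    moreover have "real ((2 * D - 1) ^ (x - 1)) = (real m - 1) ^ (x - 1)" unfolding m_def using D by (simp add: of_nat_diff)
    ultimately show ?thesis unfolding q_def r_def using m by (simp add: power_divide)
  qed
  have "r ^ (m - 1) \<le> r ^ (x - 1)" using x r0 unfolding m_def by (intro power_decreasing) auto
  moreover have "exp (-1) \<le> r ^ (m - 1)"
  proof -
    have "(1 + 1 / real (m - 1)) ^ (m - 1) \<le> exp 1" using m by (intro one_plus_pow_le_exp) simp
    moreover have "1 + 1 / real (m - 1) = 1 / r" unfolding r_def using m by (simp add: of_nat_diff field_simps)
    ultimately have "(1 / r) ^ (m - 1) \<le> exp 1" by simp
    then have "1 / r ^ (m - 1) \<le> exp 1" by (simp add: power_one_over)
    moreover have "r ^ (m - 1) > 0" unfolding r_def using m by simp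
    ultimately show ?thesis by (simp add: exp_minus field_simps)
  qed
  ultimately have q1: "q \<ge> exp (-1) / real m" unfolding qr using m by (simp add: divide_right_mono)
  have "exp (-1::real) \<ge> 1 / 3" using exp_le by (simp add: exp_minus field_simps)
  then have "exp (-1) / real m \<ge> (1 / 3) / real m" by (rule divide_right_mono) simp
  then have q2: "q \<ge> 1 / (3 * real m)" using q1 by simp
  have "r ^ (x - 1) \<le> 1" using r0 by (rule power_le_one)
  then have q3: "q \<le> 1" unfolding qr using m by simp
  have "(1 - q) ^ K \<le> exp (- q) ^ K"
    using q3 by (intro power_mono) (auto simp: exp_ge_add_one_self[of "-q", simplified])
  also have "\<dots> = exp (- q * real K)" by (simp add: exp_of_nat_mult[symmetric] mult.commute)
  also have "\<dots> \<le> exp (- (real K / (3 * real m)))"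
  proof -
    have "real K / (3 * real m) = 1 / (3 * real m) * real K" by simp
    also have "\<dots> \<le> q * real K" using q2 by (intro mult_right_mono) auto
    finally show ?thesis by simp
  qed
  also have "\<dots> \<le> exp (- (9 / 2 * ln (real D)))"
  proof -
    have "real K / (3 * real m) \<ge> 27 * real D * ln (real D) / (6 * real D)"
    proof -
      have "27 * real D * ln (real D) / (6 * real D) \<le> real K / (6 * real D)"
        using K D by (intro divide_right_mono) auto
      then show ?thesis unfolding m_def by simp
    qed
    also have "27 * real D * ln (real D) / (6 * real D) = 9 / 2 * ln (real D)" using D by simp
    finally show ?thesis by simp
  qed
  finally have b1: "(1 - q) ^ K \<le> exp (- (9 / 2 * ln (real D)))" .
  have lnD: "ln (real D) \<ge> 1"
  proof -
    have "exp 1 \<le> real D" using exp_le D by linarith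
    then show ?thesis using D by (simp add: ln_ge_iff)
  qed
  have "exp (9 / 2 * ln (real D)) = exp (4 * ln (real D)) * exp (ln (real D) / 2)"
    by (simp add: exp_add[symmetric])
  also have "exp (4 * ln (real D)) = real D ^ 4"
  proof -
    have "exp (real 4 * ln (real D)) = exp (ln (real D)) ^ 4" by (rule exp_of_nat_mult)
    then show ?thesis using D by simp
  qed
  finally have "exp (9 / 2 * ln (real D)) \<ge> real D ^ 4 * (1 + ln (real D) / 2)"
    using exp_ge_add_one_self[of "ln (real D) / 2"] by (simp add: mult_left_mono)
  moreover have "real D ^ 4 * (1 + ln (real D) / 2) \<ge> real D ^ 4 * (3 / 2)" using lnD by (intro mult_left_mono) auto
  moreover have "real D ^ 4 * (3 / 2) \<ge> 4 * (2 * real D ^ 3 + 1)"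
  proof -
    have "real D ^ 4 = real D * real D ^ 3" by (simp add: power_Suc[symmetric] del: power_Suc)
    moreover have "real D * real D ^ 3 \<ge> 6 * real D ^ 3" using D by (intro mult_right_mono) auto
    moreover have "real D ^ 3 \<ge> 4"
    proof -
      have "real D ^ 3 \<ge> 6 ^ 3" using D by (intro power_mono) auto
      then show ?thesis by simp
    qed
    ultimately have "real D ^ 4 \<ge> 6 * real D ^ 3" by linarith
    then have "real D ^ 4 * (3 / 2) \<ge> 6 * real D ^ 3 * (3 / 2)" by (intro mult_right_mono) auto
    moreover note \<open>real D ^ 3 \<ge> 4\<close>
    ultimately show ?thesis by argo
  qed
  ultimately have b2: "4 * (2 * real D ^ 3 + 1) \<le> exp (9 / 2 * ln (real D))" by linarith
  have "4 * (2 * real D ^ 3 + 1) * (1 - q) ^ K \<le> exp (9 / 2 * ln (real D)) * exp (- (9 / 2 * ln (real D)))"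
    using b1 b2 q3 by (intro mult_mono) auto
  also have "\<dots> = 1" by (simp add: exp_minus)
  finally show ?thesis unfolding q_def .
qed



lemma lll_piece:
  fixes V :: "'a set" and lf ct :: "'a set \<Rightarrow> 'a"
  assumes G: "simple_graph V E" and md: "max_degree V E = \<Delta>" and D6: "\<Delta> \<ge> 6"
    and indA: "\<And>x y. {x, y} \<in> E \<Longrightarrow> \<not> (x \<in> A \<and> y \<in> A)"
    and E'E: "E' \<subseteq> E"
    and ori: "\<And>e. e \<in> E' \<Longrightarrow> e = {lf e, ct e} \<and> lf e \<in> A \<and> ct e \<notin> A"
    and K: "real K \<ge> 27 * real \<Delta> * ln (real \<Delta>)"
  shows "\<exists>col. col ` E' \<subseteq> {..<K} \<and> (\<forall>e\<in>E'. \<forall>f\<in>E'. e \<noteq> f \<and> inj_conflict E e f \<longrightarrow> col e \<noteq> col f)"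
proof -
  define m where "m = 2 * \<Delta>"
  define I where "I = V \<times> {..<K}"
  define \<Omega> where "\<Omega> = PiE I (\<lambda>_. {..<m})"
  define X where "X e = nbr E (lf e) \<union> nbr E (ct e)" for e
  define Bad where "Bad e = BadS V K m (X e) (ct e)" for e
  define \<Gamma> where "\<Gamma> e = {f\<in>E'. f \<noteq> e \<and> X f \<inter> X e \<noteq> {}}" for e
  define d where "d = 2 * \<Delta> ^ 3"
  have finV: "finite V" using G unfolding simple_graph_def by simp
  have finE: "finite E" by (rule sg_finite_E[OF G])
  have finE': "finite E'" using finE E'E finite_subset by blast
  have mpos: "m > 0" unfolding m_def using D6 by simp
  have finI: "finite I" unfolding I_def using finV by simp
  have finO: "finite \<Omega>" unfolding \<Omega>_def using finI by (simp add: finite_PiE)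
  have neO: "\<Omega> \<noteq> {}" unfolding \<Omega>_def using mpos by (auto simp: PiE_eq_empty_iff lessThan_empty_iff)
  have Kpos: "K > 0"
  proof -
    have "ln (real \<Delta>) > 0" using D6 by simp
    then have "27 * real \<Delta> * ln (real \<Delta>) > 0" using D6 by simp
    then show ?thesis using K by linarith
  qed
  have ctX: "ct e \<in> X e" if "e \<in> E'" for e
  proof -
    have "{lf e, ct e} \<in> E" using ori[OF that] E'E that by auto
    then show ?thesis unfolding X_def nbr_def by simp
  qed
  have XV: "X e \<subseteq> V" for e unfolding X_def using nbr_sub[OF G] by blast
  have finX: "finite (X e)" for e using XV finV finite_subset by blast
  have cX: "card (X e) \<le> 2 * \<Delta>" for e
    using card_Un_le[of "nbr E (lf e)" "nbr E (ct e)"] card_nbr[OF G md, of "lf e"] card_nbr[OF G md, of "ct e"]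
    unfolding X_def by linarith
  have cX1: "card (X e) \<ge> 1" if "e \<in> E'" for e
    using ctX[OF that] finX[of e] by (metis One_nat_def Suc_leI card_gt_0_iff empty_iff)
  have BadO: "Bad e \<subseteq> \<Omega>" for e unfolding Bad_def BadS_def \<Omega>_def I_def by auto
  have indep: "card (Bad e \<inter> (\<Omega> - \<Union>(Bad ` S))) * card \<Omega> \<le> card (Bad e) * card (\<Omega> - \<Union>(Bad ` S))"
    if e: "e \<in> E'" and S: "S \<subseteq> E'" "e \<notin> S" "S \<inter> \<Gamma> e = {}" for e S
  proof -
    have disj: "X f \<inter> X e = {}" if "f \<in> S" for f using S that unfolding \<Gamma>_def by blast
    have d1: "dep \<Omega> (X e \<times> {..<K}) (Bad e)"
      unfolding \<Omega>_def I_def Bad_def by (rule BadS_dep[OF ctX[OF e]])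
    have d2: "dep \<Omega> (\<Union>f\<in>S. X f \<times> {..<K}) (\<Omega> - \<Union>(Bad ` S))"
    proof (rule dep_none)
      fix f assume "f \<in> S"
      then have "f \<in> E'" using S by blast
      then show "dep \<Omega> (X f \<times> {..<K}) (Bad f)"
        unfolding \<Omega>_def I_def Bad_def by (rule BadS_dep[OF ctX])
    qed
    have sub: "(\<Union>f\<in>S. X f \<times> {..<K}) \<subseteq> I - X e \<times> {..<K}"
      using disj XV unfolding I_def by blast
    have "card (Bad e \<inter> (\<Omega> - \<Union>(Bad ` S))) * card \<Omega> = card (Bad e) * card (\<Omega> - \<Union>(Bad ` S))"
      unfolding \<Omega>_def
    proof (rule indep_card)
      show "X e \<times> {..<K} \<subseteq> I" using XV unfolding I_def by auto
      show "Bad e \<subseteq> PiE I (\<lambda>_. {..<m})" using BadO unfolding \<Omega>_def .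
      show "dep (PiE I (\<lambda>_. {..<m})) (X e \<times> {..<K}) (Bad e)" using d1 unfolding \<Omega>_def .
      show "PiE I (\<lambda>_. {..<m}) - \<Union>(Bad ` S) \<subseteq> PiE I (\<lambda>_. {..<m})" by blast
      show "dep (PiE I (\<lambda>_. {..<m})) (I - X e \<times> {..<K}) (PiE I (\<lambda>_. {..<m}) - \<Union>(Bad ` S))"
        using dep_mono[OF d2 sub] unfolding \<Omega>_def .
    qed
    then show ?thesis by simp
  qed
  have deg: "card (\<Gamma> e \<inter> E') \<le> d" if e: "e \<in> E'" for e
  proof -
    define M2 where "M2 = (\<Union>w\<in>X e. nbr E w)"
    have finM2: "finite M2" unfolding M2_def using finX nbr_finite[OF G] by blast
    have "card M2 \<le> (\<Sum>w\<in>X e. card (nbr E w))" unfolding M2_def by (rule card_UN_le[OF finX])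
    also have "\<dots> \<le> (\<Sum>w\<in>X e. \<Delta>)" by (rule sum_mono) (rule card_nbr[OF G md])
    also have "\<dots> = card (X e) * \<Delta>" by simp
    also have "\<dots> \<le> 2 * \<Delta> * \<Delta>" using cX[of e] by simp
    finally have cM2: "card M2 \<le> 2 * \<Delta> * \<Delta>" .
    have "\<Gamma> e \<inter> E' \<subseteq> {f\<in>E. f \<inter> M2 \<noteq> {}}"
    proof
      fix f assume f: "f \<in> \<Gamma> e \<inter> E'"
      then obtain w where w: "w \<in> X f" "w \<in> X e" unfolding \<Gamma>_def by blast
      have fo: "f = {lf f, ct f}" using ori f by blast
      have "lf f \<in> nbr E w \<or> ct f \<in> nbr E w" using w(1) unfolding X_def nbr_def by (auto simp: insert_commute)
      then have "f \<inter> M2 \<noteq> {}" using w(2) fo unfolding M2_def by auto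
      then show "f \<in> {f\<in>E. f \<inter> M2 \<noteq> {}}" using f E'E by auto
    qed
    then have "card (\<Gamma> e \<inter> E') \<le> card {f\<in>E. f \<inter> M2 \<noteq> {}}" using finE by (intro card_mono) auto
    also have "\<dots> \<le> card M2 * \<Delta>" by (rule card_edges_meeting[OF G md finM2])
    also have "\<dots> \<le> 2 * \<Delta> * \<Delta> * \<Delta>" using cM2 by simp
    finally show ?thesis unfolding d_def by (simp add: power3_eq_cube mult.assoc)
  qed
  have small: "4 * (d + 1) * card (Bad e) \<le> card \<Omega>" if e: "e \<in> E'" for e
  proof -
    have bp: "real (card (Bad e)) = (1 - real ((m - 1) ^ (card (X e) - 1)) / real (m ^ card (X e))) ^ K * real (card \<Omega>)"
      unfolding Bad_def \<Omega>_def I_def by (rule bad_prob[OF finV XV ctX[OF e] mpos Kpos])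
    have nm: "4 * (2 * real \<Delta> ^ 3 + 1) * (1 - real ((2 * \<Delta> - 1) ^ (card (X e) - 1)) / real ((2 * \<Delta>) ^ card (X e))) ^ K \<le> 1"
      by (rule numeric[OF D6 K cX1[OF e] cX])
    have "real (4 * (d + 1) * card (Bad e)) = 4 * (2 * real \<Delta> ^ 3 + 1) * (1 - real ((m - 1) ^ (card (X e) - 1)) / real (m ^ card (X e))) ^ K * real (card \<Omega>)"
      unfolding d_def using bp by simp
    also have "\<dots> \<le> 1 * real (card \<Omega>)" using nm unfolding m_def by (intro mult_right_mono) auto
    finally have "real (4 * (d + 1) * card (Bad e)) \<le> real (card \<Omega>)" by simp
    then show ?thesis by (simp only: of_nat_le_iff)
  qed
  obtain \<omega> where \<omega>: "\<omega> \<in> \<Omega>" "\<forall>e\<in>E'. \<omega> \<notin> Bad e"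
    using lll[where \<Omega>=\<Omega> and J=E' and A=Bad and \<Gamma>=\<Gamma> and d=d, OF finO finE' neO BadO indep deg small] by blast
  have ex: "\<exists>t<K. goodw (X e) (ct e) t \<omega>" if e: "e \<in> E'" for e
    using \<omega> e unfolding Bad_def BadS_def \<Omega>_def I_def by auto
  define col where "col e = (LEAST t. goodw (X e) (ct e) t \<omega>)" for e
  have colK: "col e < K" and colg: "goodw (X e) (ct e) (col e) \<omega>" if e: "e \<in> E'" for e
  proof -
    obtain t where t: "t < K" "goodw (X e) (ct e) t \<omega>" using ex[OF e] by blast
    show "goodw (X e) (ct e) (col e) \<omega>" unfolding col_def by (rule LeastI[where P="\<lambda>t. goodw (X e) (ct e) t \<omega>", OF t(2)])
    have "col e \<le> t" unfolding col_def by (rule Least_le[where P="\<lambda>t. goodw (X e) (ct e) t \<omega>", OF t(2)])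
    then show "col e < K" using t(1) by simp
  qed
  have "\<forall>e\<in>E'. \<forall>f\<in>E'. e \<noteq> f \<and> inj_conflict E e f \<longrightarrow> col e \<noteq> col f"
  proof (intro ballI impI notI)
    fix e f assume e: "e \<in> E'" and f: "f \<in> E'" and c: "e \<noteq> f \<and> inj_conflict E e f" and eq: "col e = col f"
    define t where "t = col e"
    define Z where "Z = {w. \<omega> (w, t) = 0}"
    have ge: "goodw (X e) (ct e) t \<omega>" using colg[OF e] unfolding t_def .
    have gf: "goodw (X f) (ct f) t \<omega>" using colg[OF f] eq unfolding t_def by simp
    have "\<not> inj_conflict E e f"
    proof (rule good_noconflict[OF G indA])
      show "e = {lf e, ct e}" "lf e \<in> A" "ct e \<notin> A" using ori[OF e] by auto
      show "f = {lf f, ct f}" "lf f \<in> A" "ct f \<notin> A" using ori[OF f] by auto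
      show "e \<in> E" "f \<in> E" using e f E'E by auto
      show "e \<noteq> f" using c by simp
      show "ct e \<in> Z" "ct f \<in> Z" using ge gf unfolding Z_def goodw_def by auto
      show "\<forall>w\<in>nbr E (lf e) \<union> nbr E (ct e) - {ct e}. w \<notin> Z" using ge unfolding Z_def goodw_def X_def by auto
      show "\<forall>w\<in>nbr E (lf f) \<union> nbr E (ct f) - {ct f}. w \<notin> Z" using gf unfolding Z_def goodw_def X_def by auto
    qed
    then show False using c by simp
  qed
  moreover have "col ` E' \<subseteq> {..<K}" using colK by auto
  ultimately show ?thesis by blast
qed



lemma ln2_half: "ln (2::real) \<ge> 1 / 2"
proof -
  have "exp (1 / 2 :: real) \<le> 2"
  proof (rule ccontr)
    assume "\<not> exp (1 / 2 :: real) \<le> 2"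
    then have "exp (1 / 2 :: real) > 2" by simp
    then have "exp (1 / 2 :: real) * exp (1 / 2) > 2 * 2" by (intro mult_strict_mono) auto
    moreover have "exp (1 / 2 :: real) * exp (1 / 2) = exp 1" by (simp add: exp_add[symmetric])
    ultimately show False using exp_le by simp
  qed
  then show ?thesis using ln_ge_iff[of "2::real" "1/2"] by linarith
qed

lemma small_K:
  fixes \<Delta> K :: nat
  assumes "2 \<le> \<Delta>" "\<Delta> \<le> 5" "real K \<ge> 27 * real \<Delta> * ln (real \<Delta>)"
  shows "2 * \<Delta> * \<Delta> + 1 \<le> K"
proof -
  have "ln (real \<Delta>) \<ge> ln 2" using assms(1) by simp
  then have l: "ln (real \<Delta>) \<ge> 1 / 2" using ln2_half by linarith
  have "27 * real \<Delta> * ln (real \<Delta>) \<ge> 27 * real \<Delta> * (1 / 2)"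
    using l assms(1) by (intro mult_left_mono) auto
  moreover have "27 * real \<Delta> * (1 / 2) \<ge> real (2 * \<Delta> * \<Delta> + 1)"
  proof -
    have "\<Delta> = 2 \<or> \<Delta> = 3 \<or> \<Delta> = 4 \<or> \<Delta> = 5" using assms(1,2) by auto
    then show ?thesis by auto
  qed
  ultimately have "real (2 * \<Delta> * \<Delta> + 1) \<le> real K" using assms(3) by linarith
  then show ?thesis by (simp only: of_nat_le_iff)
qed

lemma piece:
  fixes V :: "'a set"
  assumes G: "simple_graph V E" and md: "max_degree V E = \<Delta>" and D2: "\<Delta> \<ge> 2"
    and indA: "\<And>x y. {x, y} \<in> E \<Longrightarrow> \<not> (x \<in> A \<and> y \<in> A)"
    and E'E: "E' \<subseteq> E"
    and ori: "\<And>e. e \<in> E' \<Longrightarrow> \<exists>u v. e = {u, v} \<and> u \<in> A \<and> v \<notin> A"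
    and K: "real K \<ge> 27 * real \<Delta> * ln (real \<Delta>)"
  shows "\<exists>col. col ` E' \<subseteq> {..<K} \<and> (\<forall>e\<in>E'. \<forall>f\<in>E'. e \<noteq> f \<and> inj_conflict E e f \<longrightarrow> col e \<noteq> col f)"
proof (cases "\<Delta> \<ge> 6")
  case True
  define lf where "lf e = (SOME u. u \<in> e \<and> u \<in> A)" for e :: "'a set"
  define ct where "ct e = (SOME v. v \<in> e \<and> v \<notin> A)" for e :: "'a set"
  have o: "e = {lf e, ct e} \<and> lf e \<in> A \<and> ct e \<notin> A" if e: "e \<in> E'" for e
  proof -
    obtain u v where uv: "e = {u, v}" "u \<in> A" "v \<notin> A" using ori[OF e] by blast
    have "lf e \<in> e \<and> lf e \<in> A" unfolding lf_def by (rule someI[of _ u]) (use uv in auto)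
    then have l: "lf e = u" "lf e \<in> A" using uv by auto
    have "ct e \<in> e \<and> ct e \<notin> A" unfolding ct_def by (rule someI[of _ v]) (use uv in auto)
    then have c: "ct e = v" "ct e \<notin> A" using uv by auto
    show ?thesis using l c uv by simp
  qed
  show ?thesis by (rule lll_piece[OF G md True indA E'E o K])
next
  case False
  obtain col where col: "col ` E' \<subseteq> {..<2 * \<Delta> * \<Delta> + 1}"
    "\<forall>e\<in>E'. \<forall>f\<in>E'. e \<noteq> f \<and> inj_conflict E e f \<longrightarrow> col e \<noteq> col f"
    using greedy_piece[OF G md E'E] by blast
  have "2 * \<Delta> * \<Delta> + 1 \<le> K" using small_K[OF D2 _ K] False by simp
  then have "col ` E' \<subseteq> {..<K}" using col(1) by auto
  then show ?thesis using col(2) by blast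
qed



lemma exists_coloring:
  assumes G: "simple_graph V E"
  shows "\<exists>c. proper_vertex_coloring V E (chromatic_number V E) c"
proof -
  have finV: "finite V" using G unfolding simple_graph_def by simp
  obtain h where h: "bij_betw h V {0..<card V}" using ex_bij_betw_finite_nat[OF finV] by blast
  have "proper_vertex_coloring V E (card V) h"
    unfolding proper_vertex_coloring_def
  proof
    show "h ` V \<subseteq> {..<card V}" using h by (auto simp: bij_betw_def)
    show "\<forall>u v. {u, v} \<in> E \<longrightarrow> h u \<noteq> h v"
    proof (intro allI impI)
      fix u v assume "{u, v} \<in> E"
      then have "u \<in> V" "v \<in> V" "u \<noteq> v" using sg_edge[OF G] by auto
      then show "h u \<noteq> h v" using h by (auto simp: bij_betw_def inj_on_def)
    qed
  qed
  then have "\<exists>k c. proper_vertex_coloring V E k c" by blast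
  then show ?thesis unfolding chromatic_number_def by (rule LeastI_ex)
qed

lemma edge_orient:
  assumes G: "simple_graph V E" and c: "proper_vertex_coloring V E k c" and e: "e \<in> E"
  shows "\<exists>u v. e = {u, v} \<and> c u < c v \<and> c v < k"
proof -
  obtain x y where xy: "e = {x, y}" "x \<noteq> y" using sg_edge2[OF G e] by blast
  have "c x \<noteq> c y" using c e xy unfolding proper_vertex_coloring_def by blast
  moreover have "c x < k" "c y < k" using c sg_edge[OF G] e xy unfolding proper_vertex_coloring_def by blast+
  ultimately show ?thesis using xy by (metis insert_commute linorder_neqE_nat)
qed

lemma bound_from_coloring:
  assumes "injective_edge_coloring E k col"
  shows "inj_chromatic_index E \<le> k"
  unfolding inj_chromatic_index_def using assms by (intro Least_le) blast

lemma part1: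
  fixes V :: "'a set"
  assumes G: "simple_graph V E" and D2: "2 \<le> \<Delta>" and md: "max_degree V E = \<Delta>" and chi: "chromatic_number V E = \<chi>"
    and chi2: "2 \<le> \<chi>"
    and K: "real K \<ge> 27 * real \<Delta> * ln (real \<Delta>)"
  shows "inj_chromatic_index E \<le> (\<chi> - 1) * K"
proof -
  obtain c where c: "proper_vertex_coloring V E \<chi> c" using exists_coloring[OF G] chi by auto
  define A where "A i = {x. c x = i}" for i
  define Ei where "Ei i = {e\<in>E. \<exists>u v. e = {u, v} \<and> c u = i \<and> i < c v}" for i
  have "\<forall>i. \<exists>col. col ` Ei i \<subseteq> {..<K} \<and> (\<forall>e\<in>Ei i. \<forall>f\<in>Ei i. e \<noteq> f \<and> inj_conflict E e f \<longrightarrow> col e \<noteq> col f)"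
  proof
    fix i
    show "\<exists>col. col ` Ei i \<subseteq> {..<K} \<and> (\<forall>e\<in>Ei i. \<forall>f\<in>Ei i. e \<noteq> f \<and> inj_conflict E e f \<longrightarrow> col e \<noteq> col f)"
    proof (rule piece[OF G md D2 _ _ _ K, where A="A i"])
      show "\<not> (x \<in> A i \<and> y \<in> A i)" if "{x, y} \<in> E" for x y
      proof -
        have "c x \<noteq> c y" using c that unfolding proper_vertex_coloring_def by blast
        then show ?thesis unfolding A_def by auto
      qed
      show "Ei i \<subseteq> E" unfolding Ei_def by auto
      show "\<And>e. e \<in> Ei i \<Longrightarrow> \<exists>u v. e = {u, v} \<and> u \<in> A i \<and> v \<notin> A i"
        unfolding Ei_def A_def by fastforce
    qed
  qed
  then obtain cols where cols: "\<And>i. cols i ` Ei i \<subseteq> {..<K}"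
    "\<And>i. \<forall>e\<in>Ei i. \<forall>f\<in>Ei i. e \<noteq> f \<and> inj_conflict E e f \<longrightarrow> cols i e \<noteq> cols i f"
    by metis
  define idx where "idx e = Min (c ` e)" for e
  have idx: "e \<in> Ei (idx e) \<and> idx e + 1 \<le> \<chi> - 1" if e: "e \<in> E" for e
  proof -
    obtain u v where uv: "e = {u, v}" "c u < c v" "c v < \<chi>" using edge_orient[OF G c e] by blast
    have "idx e = c u" unfolding idx_def uv(1) using uv(2) by simp
    then show ?thesis using uv e unfolding Ei_def by auto
  qed
  have Kpos: "K > 0"
  proof -
    have "ln (real \<Delta>) > 0" using D2 by simp
    then have "27 * real \<Delta> * ln (real \<Delta>) > 0" using D2 by simp
    then show ?thesis using K by linarith
  qed
  define col where "col e = idx e * K + cols (idx e) e" for e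
  have lt: "cols (idx e) e < K" if "e \<in> E" for e using cols(1) idx[OF that] by blast
  have "injective_edge_coloring E ((\<chi> - 1) * K) col"
    unfolding injective_edge_coloring_def
  proof
    show "col ` E \<subseteq> {..<(\<chi> - 1) * K}"
    proof
      fix x assume "x \<in> col ` E"
      then obtain e where e: "e \<in> E" "x = col e" by blast
      have "col e < idx e * K + K" unfolding col_def using lt[OF e(1)] by simp
      also have "\<dots> = (idx e + 1) * K" by simp
      also have "\<dots> \<le> (\<chi> - 1) * K" using idx[OF e(1)] by (intro mult_right_mono) auto
      finally show "x \<in> {..<(\<chi> - 1) * K}" using e by simp
    qed
    show "\<forall>e\<in>E. \<forall>f\<in>E. e \<noteq> f \<and> inj_conflict E e f \<longrightarrow> col e \<noteq> col f"
    proof (intro ballI impI)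
      fix e f assume e: "e \<in> E" and f: "f \<in> E" and cf: "e \<noteq> f \<and> inj_conflict E e f"
      have de: "col e div K = idx e" unfolding col_def using lt[OF e] Kpos by simp
      have df: "col f div K = idx f" unfolding col_def using lt[OF f] Kpos by simp
      show "col e \<noteq> col f"
      proof (cases "idx e = idx f")
        case True
        then have "cols (idx e) e \<noteq> cols (idx e) f" using cols(2)[of "idx e"] idx[OF e] idx[OF f] cf by auto
        then show ?thesis unfolding col_def using True by simp
      next
        case False
        then show ?thesis using de df by metis
      qed
    qed
  qed
  then show ?thesis by (rule bound_from_coloring)
qed

lemma part2:
  fixes V :: "'a set"
  assumes G: "simple_graph V E" and bip: "bipartite V E" and md: "max_degree V E = \<Delta>" and D2: "2 \<le> \<Delta>"
    and K: "real K \<ge> 27 * real \<Delta> * ln (real \<Delta>)"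
  shows "inj_chromatic_index E \<le> K"
proof -
  obtain c where c: "proper_vertex_coloring V E 2 c" using bip unfolding bipartite_def by blast
  have "\<exists>col. col ` E \<subseteq> {..<K} \<and> (\<forall>e\<in>E. \<forall>f\<in>E. e \<noteq> f \<and> inj_conflict E e f \<longrightarrow> col e \<noteq> col f)"
  proof (rule piece[OF G md D2 _ _ _ K, where A="{x. c x = 0}"])
    show "\<not> (x \<in> {x. c x = 0} \<and> y \<in> {x. c x = 0})" if "{x, y} \<in> E" for x y
    proof -
      have "c x \<noteq> c y" using c that unfolding proper_vertex_coloring_def by blast
      then show ?thesis by auto
    qed
    show "E \<subseteq> E" by simp
    show "\<And>e. e \<in> E \<Longrightarrow> \<exists>u v. e = {u, v} \<and> u \<in> {x. c x = 0} \<and> v \<notin> {x. c x = 0}"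
    proof -
      fix e assume "e \<in> E"
      then obtain u v where "e = {u, v}" "c u < c v" "c v < 2" using edge_orient[OF G c] by blast
      then show "\<exists>u v. e = {u, v} \<and> u \<in> {x. c x = 0} \<and> v \<notin> {x. c x = 0}"
        by (intro exI[of _ u] exI[of _ v]) auto
    qed
  qed
  then obtain col where "injective_edge_coloring E K col" unfolding injective_edge_coloring_def by blast
  then show ?thesis by (rule bound_from_coloring)
qed

theorem theorem1p6:
  shows "(\<forall>(V :: 'a set) E (\<Delta>::nat) (\<chi>::nat).
            simple_graph V E \<and> 2 \<le> \<chi> \<and> \<chi> \<le> \<Delta> \<and>
            max_degree V E = \<Delta> \<and> chromatic_number V E = \<chi> \<longrightarrow>
            int (inj_chromatic_index E) \<le> (int \<chi> - 1) * \<lceil>27 * real \<Delta> * ln (real \<Delta>)\<rceil>)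
       \<and> (\<forall>(V :: 'a set) E (\<Delta>::nat).
            simple_graph V E \<and> bipartite V E \<and> max_degree V E = \<Delta> \<and> 2 \<le> \<Delta> \<longrightarrow>
            int (inj_chromatic_index E) \<le> \<lceil>27 * real \<Delta> * ln (real \<Delta>)\<rceil>)"
proof (intro conjI allI impI)
  fix V :: "'a set" and E and \<Delta> \<chi> :: nat
  assume a: "simple_graph V E \<and> 2 \<le> \<chi> \<and> \<chi> \<le> \<Delta> \<and> max_degree V E = \<Delta> \<and> chromatic_number V E = \<chi>"
  define z where "z = \<lceil>27 * real \<Delta> * ln (real \<Delta>)\<rceil>"
  have "ln (real \<Delta>) \<ge> 0" using a by simp
  then have "27 * real \<Delta> * ln (real \<Delta>) \<ge> 0" by simp
  then have z0: "z \<ge> 0" unfolding z_def by simp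
  have K: "real (nat z) \<ge> 27 * real \<Delta> * ln (real \<Delta>)" unfolding z_def
    by (metis of_int_ceiling_le_add_one le_of_int_ceiling of_nat_nat z0 z_def order_trans order_refl)
  have "inj_chromatic_index E \<le> (\<chi> - 1) * nat z" using part1[OF _ _ _ _ _ K] a by auto
  then have "int (inj_chromatic_index E) \<le> int ((\<chi> - 1) * nat z)" by (simp only: of_nat_le_iff)
  also have "\<dots> = (int \<chi> - 1) * z" using a z0 by (simp add: of_nat_diff)
  finally show "int (inj_chromatic_index E) \<le> (int \<chi> - 1) * \<lceil>27 * real \<Delta> * ln (real \<Delta>)\<rceil>" unfolding z_def .
next
  fix V :: "'a set" and E and \<Delta> :: nat
  assume a: "simple_graph V E \<and> bipartite V E \<and> max_degree V E = \<Delta> \<and> 2 \<le> \<Delta>"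
  define z where "z = \<lceil>27 * real \<Delta> * ln (real \<Delta>)\<rceil>"
  have "ln (real \<Delta>) \<ge> 0" using a by simp
  then have "27 * real \<Delta> * ln (real \<Delta>) \<ge> 0" by simp
  then have z0: "z \<ge> 0" unfolding z_def by simp
  have K: "real (nat z) \<ge> 27 * real \<Delta> * ln (real \<Delta>)" unfolding z_def
    by (metis le_of_int_ceiling of_nat_nat z0 z_def of_int_of_nat_eq)
  have "inj_chromatic_index E \<le> nat z" using part2[OF _ _ _ _ K] a by auto
  then show "int (inj_chromatic_index E) \<le> \<lceil>27 * real \<Delta> * ln (real \<Delta>)\<rceil>" using z0 unfolding z_def by linarith
qed

end
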